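(* Let $n,m\ge1$, $r>0$, let $\varphi_1,\dots,\varphi_n:\mathbb{R}\to[0,\infty)$ be nonnegative functions and $x_1,\dots,x_m\in\mathbb{R}$ such that for each $j$ there is $i$ with $\varphi_i(x_j)>0$. Set $v^1_i=\sqrt{r/n}$ for $i=1,\dots,n$. For $k\ge1$, given $v^k\in[0,\infty)^n$, let $u^k\in[0,\infty)^n$ with $\sum_i(u^k_i)^2=r$ be a point at which $\widehat l^{\,k}(u)=\prod_{j=1}^m\big(\sum_{i=1}^n u_iv^k_i\varphi_i(x_j)\big)$ attains its maximum over the sphere $\{u\in\mathbb{R}^n:\sum_iu_i^2=r\}$; let $\overline\theta^{k+1}>0$ satisfy $(\overline\theta^{k+1})^2\sum_i u^k_iv^k_i=r$ and set $v^{k+1}_i=\overline\theta^{k+1}\sqrt{u^k_iv^k_i}$. Let $P^k=\sum_{i=1}^n u^k_iv^k_i$. Then $\lim_{k\to\infty}P^k=r$; in particular, for every $\varepsilon>0$ there is $k$ with $P^k+\varepsilon\ge r$, so the procedure that stops at the first $k$ with $\sum_i u^k_iv^k_i+\varepsilon\ge r$ terminates after finitely many steps. *)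

theory Defs
  imports Complex_Main
begin

definition lhat :: "nat \<Rightarrow> nat \<Rightarrow> (nat \<Rightarrow> real \<Rightarrow> real) \<Rightarrow> (nat \<Rightarrow> real)
    \<Rightarrow> (nat \<Rightarrow> real) \<Rightarrow> (nat \<Rightarrow> real) \<Rightarrow> real" where
  "lhat n m \<phi> x v w = (\<Prod>j<m. \<Sum>i<n. w i * v i * \<phi> i (x j))"

end

theory Submission
  imports Defs
begin

theorem lemma7:
  fixes n m :: nat and r :: real
    and \<phi> :: "nat \<Rightarrow> real \<Rightarrow> real" and x :: "nat \<Rightarrow> real"
    and u v :: "nat \<Rightarrow> nat \<Rightarrow> real" and \<theta> :: "nat \<Rightarrow> real"
  assumes "n \<ge> 1" and "m \<ge> 1" and "r > 0"
    and phi_nonneg: "\<And>i t. i < n \<Longrightarrow> \<phi> i t \<ge> 0"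
    and data: "\<And>j. j < m \<Longrightarrow> \<exists>i<n. \<phi> i (x j) > 0"
    and v1: "\<And>i. i < n \<Longrightarrow> v 1 i = sqrt (r / real n)"
    and u_nonneg: "\<And>k i. k \<ge> 1 \<Longrightarrow> i < n \<Longrightarrow> u k i \<ge> 0"
    and u_sphere: "\<And>k. k \<ge> 1 \<Longrightarrow> (\<Sum>i<n. (u k i)\<^sup>2) = r"
    and u_max: "\<And>k w. k \<ge> 1 \<Longrightarrow> (\<Sum>i<n. (w i)\<^sup>2) = r \<Longrightarrow>
                  lhat n m \<phi> x (v k) w \<le> lhat n m \<phi> x (v k) (u k)"
    and theta_pos: "\<And>k. k \<ge> 1 \<Longrightarrow> \<theta> (k + 1) > 0"
    and theta_eq: "\<And>k. k \<ge> 1 \<Longrightarrow> (\<theta> (k + 1))\<^sup>2 * (\<Sum>i<n. u k i * v k i) = r"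
    and v_step: "\<And>k i. k \<ge> 1 \<Longrightarrow> i < n \<Longrightarrow> v (k + 1) i = \<theta> (k + 1) * sqrt (u k i * v k i)"
  shows "((\<lambda>k. \<Sum>i<n. u k i * v k i) \<longlonglongrightarrow> r)
       \<and> (\<forall>\<epsilon>>0. \<exists>k\<ge>1. (\<Sum>i<n. u k i * v k i) + \<epsilon> \<ge> r)"
proof -
  define P where "P k = (\<Sum>i<n. u k i * v k i)" for k
  define a where "a k = (\<Prod>j<m. \<Sum>i<n. v k i * v k i * \<phi> i (x j))" for k
  have vprop: "(\<forall>i<n. v k i \<ge> 0) \<and> (\<Sum>i<n. (v k i)\<^sup>2) = r" if "k \<ge> 1" for k
    using that
  proof (induction k rule: nat_induct_at_least)
    case base
    have rn: "r / real n \<ge> 0" using assms(3) by simp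
    have "(\<Sum>i<n. (v 1 i)\<^sup>2) = (\<Sum>i<n. r / real n)"
      by (rule sum.cong) (use v1 rn in auto)
    also have "\<dots> = r" using assms(1) by simp
    finally show ?case using v1 rn by simp
  next
    case (Suc k)
    have nn: "u k i * v k i \<ge> 0" if "i < n" for i
      using Suc u_nonneg that by simp
    have Pk: "(\<theta> (k + 1))\<^sup>2 * P k = r" using theta_eq Suc unfolding P_def by simp
    have "(\<Sum>i<n. (v (Suc k) i)\<^sup>2) = (\<Sum>i<n. (\<theta> (k + 1))\<^sup>2 * (u k i * v k i))"
      by (rule sum.cong) (use v_step Suc nn in \<open>auto simp: power_mult_distrib\<close>)
    also have "\<dots> = r" using Pk unfolding P_def by (simp add: sum_distrib_left)
    finally show ?case using v_step[of k] Suc theta_pos[of k] nn by (simp add: less_imp_le)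
  qed
  have Ppos: "P k > 0" if "k \<ge> 1" for k
  proof -
    have "P k \<ge> 0" unfolding P_def using vprop[OF that] u_nonneg[OF that] by (intro sum_nonneg) auto
    moreover have "P k \<noteq> 0" using theta_eq[OF that] assms(3) unfolding P_def by auto
    ultimately show ?thesis by simp
  qed
  have Ple: "P k \<le> r" if "k \<ge> 1" for k
  proof -
    have "P k \<le> (\<Sum>i<n. ((u k i)\<^sup>2 + (v k i)\<^sup>2) / 2)"
      unfolding P_def
    proof (rule sum_mono)
      fix i show "u k i * v k i \<le> ((u k i)\<^sup>2 + (v k i)\<^sup>2) / 2"
        using sum_squares_bound[of "u k i" "v k i"] by (simp add: power2_eq_square)
    qed
    also have "\<dots> = r" using vprop[OF that] u_sphere[OF that]
      by (simp add: sum_divide_distrib[symmetric] sum.distrib)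
    finally show ?thesis .
  qed
  have anonneg: "a k \<ge> 0" if "k \<ge> 1" for k
    unfolding a_def using vprop[OF that] phi_nonneg
    by (intro prod_nonneg sum_nonneg) auto
  define B where "B = (\<Prod>j<m. \<Sum>i<n. r * \<phi> i (x j))"
  have aB: "a k \<le> B" if "k \<ge> 1" for k
    unfolding a_def B_def
  proof (rule prod_mono, rule conjI)
    fix j
    show "0 \<le> (\<Sum>i<n. v k i * v k i * \<phi> i (x j))"
      using vprop[OF that] phi_nonneg by (intro sum_nonneg) auto
    show "(\<Sum>i<n. v k i * v k i * \<phi> i (x j)) \<le> (\<Sum>i<n. r * \<phi> i (x j))"
    proof (rule sum_mono)
      fix i assume i: "i \<in> {..<n}"
      have "(v k i)\<^sup>2 \<le> (\<Sum>i<n. (v k i)\<^sup>2)"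
        using i by (intro member_le_sum) auto
      then have "v k i * v k i \<le> r" using vprop[OF that] by (simp add: power2_eq_square)
      then show "v k i * v k i * \<phi> i (x j) \<le> r * \<phi> i (x j)"
        using phi_nonneg i by (intro mult_right_mono) auto
    qed
  qed
  have astep: "a (k + 1) = ((\<theta> (k + 1))\<^sup>2) ^ m * lhat n m \<phi> x (v k) (u k)" if "k \<ge> 1" for k
  proof -
    have nn: "u k i * v k i \<ge> 0" if "i < n" for i
      using vprop[OF \<open>k \<ge> 1\<close>] u_nonneg[OF \<open>k \<ge> 1\<close>] that by simp
    have "a (k + 1) = (\<Prod>j<m. (\<theta> (k + 1))\<^sup>2 * (\<Sum>i<n. u k i * v k i * \<phi> i (x j)))"
      unfolding a_def
    proof (rule prod.cong[OF refl])
      fix j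
      have "(\<Sum>i<n. v (k + 1) i * v (k + 1) i * \<phi> i (x j))
          = (\<Sum>i<n. (\<theta> (k + 1))\<^sup>2 * (u k i * v k i * \<phi> i (x j)))"
      proof (rule sum.cong[OF refl])
        fix i assume "i \<in> {..<n}"
        then have i: "i < n" by simp
        have "sqrt (u k i * v k i) * sqrt (u k i * v k i) = u k i * v k i"
          using nn[OF i] by simp
        then show "v (k + 1) i * v (k + 1) i * \<phi> i (x j) = (\<theta> (k + 1))\<^sup>2 * (u k i * v k i * \<phi> i (x j))"
          using v_step[OF that i] by (simp add: power2_eq_square algebra_simps)
      qed
      then show "(\<Sum>i<n. v (k + 1) i * v (k + 1) i * \<phi> i (x j))
          = (\<theta> (k + 1))\<^sup>2 * (\<Sum>i<n. u k i * v k i * \<phi> i (x j))"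
        by (simp add: sum_distrib_left)
    qed
    also have "\<dots> = ((\<theta> (k + 1))\<^sup>2) ^ m * lhat n m \<phi> x (v k) (u k)"
      unfolding lhat_def by (simp add: prod.distrib mult.commute mult.left_commute)
    finally show ?thesis .
  qed
  have akey: "a (k + 1) \<ge> (r / P k) * a k" if "k \<ge> 1" for k
  proof -
    have th: "(\<theta> (k + 1))\<^sup>2 = r / P k" using theta_eq[OF that] Ppos[OF that]
      unfolding P_def by (simp add: field_simps)
    have ge1: "r / P k \<ge> 1" using Ple[OF that] Ppos[OF that] by simp
    have "a k = lhat n m \<phi> x (v k) (v k)" unfolding a_def lhat_def by simp
    also have "\<dots> \<le> lhat n m \<phi> x (v k) (u k)" using u_max[OF that] vprop[OF that] by blast
    finally have l: "a k \<le> lhat n m \<phi> x (v k) (u k)" .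
    have "(r / P k) * a k \<le> (r / P k) ^ m * a k"
      using ge1 assms(2) anonneg[OF that]
      by (intro mult_right_mono) (auto intro: order_trans[OF _ power_increasing[of 1 m]])
    also have "\<dots> \<le> (r / P k) ^ m * lhat n m \<phi> x (v k) (u k)"
      using l ge1 by (intro mult_left_mono) auto
    also have "\<dots> = a (k + 1)" using astep[OF that] th by simp
    finally show ?thesis .
  qed
  define b where "b k = a (Suc k)" for k
  have inc: "incseq b"
  proof (rule incseq_SucI)
    fix k
    have ge1: "1 \<le> r / P (Suc k)" using Ple[of "Suc k"] Ppos[of "Suc k"] by simp
    have "b k = 1 * b k" by simp
    also have "\<dots> \<le> (r / P (Suc k)) * b k"
      using ge1 anonneg[of "Suc k"] unfolding b_def by (intro mult_right_mono) auto
    also have "\<dots> \<le> b (Suc k)" using akey[of "Suc k"] unfolding b_def by simp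
    finally show "b k \<le> b (Suc k)" .
  qed
  have b0: "b 0 > 0"
    unfolding b_def a_def
  proof (rule prod_pos)
    fix j assume "j \<in> {..<m}"
    then obtain i where i: "i < n" "\<phi> i (x j) > 0" using data by auto
    have rn: "r / real n > 0" using assms(1,3) by simp
    have vv: "v 1 i * v 1 i = r / real n" if "i < n" for i
      using v1[OF that] rn assms(3) by simp
    show "0 < (\<Sum>i<n. v (Suc 0) i * v (Suc 0) i * \<phi> i (x j))"
    proof (rule sum_pos2[of _ i])
      show "0 < v (Suc 0) i * v (Suc 0) i * \<phi> i (x j)" using vv[OF i(1)] rn i assms(3) by simp
      show "0 \<le> v (Suc 0) i * v (Suc 0) i * \<phi> i (x j)" if "i \<in> {..<n}" for i
        using vv rn phi_nonneg assms(3) that by simp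
    qed (use i in auto)
  qed
  obtain L where L: "b \<longlonglongrightarrow> L" "\<forall>i. b i \<le> L"
    using incseq_convergent[OF inc, of B] aB unfolding b_def by auto
  have Lpos: "L > 0" using L(2) b0 by (meson order_less_le_trans)
  have lim1: "(\<lambda>k. r * b k / b (Suc k)) \<longlonglongrightarrow> r * L / L"
    using L(1) LIMSEQ_Suc[OF L(1)] Lpos by (intro tendsto_intros) auto
  have bpos: "b k > 0" for k using b0 inc by (meson incseq_def order_less_le_trans zero_le)
  have lower: "r * b k / b (Suc k) \<le> P (Suc k)" for k
  proof -
    have "r * b k \<le> P (Suc k) * b (Suc k)"
      using akey[of "Suc k"] Ppos[of "Suc k"] unfolding b_def
      by (simp add: field_simps)
    then show ?thesis using bpos[of "Suc k"] by (simp add: field_simps)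
  qed
  have "(\<lambda>k. P (Suc k)) \<longlonglongrightarrow> r"
  proof (rule tendsto_sandwich[OF _ _ _ tendsto_const])
    show "\<forall>\<^sub>F k in sequentially. r * b k / b (Suc k) \<le> P (Suc k)"
      using lower by simp
    show "\<forall>\<^sub>F k in sequentially. P (Suc k) \<le> r" using Ple by simp
    show "(\<lambda>k. r * b k / b (Suc k)) \<longlonglongrightarrow> r" using lim1 Lpos by simp
  qed
  then have lim: "P \<longlonglongrightarrow> r" by (rule LIMSEQ_imp_Suc)
  have "\<forall>\<epsilon>>0. \<exists>k\<ge>1. P k + \<epsilon> \<ge> r"
  proof (intro allI impI)
    fix \<epsilon> :: real assume e: "\<epsilon> > 0"
    have "\<forall>\<^sub>F k in sequentially. dist (P k) r < \<epsilon>" using lim e by (rule tendstoD)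
    moreover have "\<forall>\<^sub>F k in sequentially. k \<ge> (1::nat)" by (rule eventually_ge_at_top)
    ultimately have "\<forall>\<^sub>F k in sequentially. dist (P k) r < \<epsilon> \<and> k \<ge> 1" by (rule eventually_conj)
    then obtain k where "dist (P k) r < \<epsilon>" "k \<ge> 1" using eventually_sequentially by auto
    then show "\<exists>k\<ge>1. P k + \<epsilon> \<ge> r" by (auto simp: dist_real_def)
  qed
  with lim show ?thesis unfolding P_def by simp
qed

end
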